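(* Let $\{a_n\}_{n\ge 0}$ be a real-valued sequence with $\{a_n\}\in GMS$. If the series $\sum_{n=0}^\infty a_n$ converges, then $n a_n\to 0$ as $n\to\infty$.
   Context: A complex sequence $\{a_n\}_{n\ge0}$ tending to $0$ is general monotone, written $\{a_n\}\in GMS$, if there exist constants $C>1$ and $\lambda>1$ such that for every $n\in\mathbb{N}$, $$\sum_{k=n}^{2n}|a_k-a_{k+1}|\le C\sum_{n/\lambda\le k\le\lambda n}\frac{|a_k|}{k}.$$ *)

theory Defs
  imports "HOL-Analysis.Analysis"
begin

definition GMS :: "(nat \<Rightarrow> complex) \<Rightarrow> bool" where
  "GMS a \<longleftrightarrow> a \<longlonglongrightarrow> 0 \<and>
     (\<exists>C::real. \<exists>L::real. C > 1 \<and> L > 1 \<and>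
        (\<forall>n::nat. n \<ge> 1 \<longrightarrow>
           (\<Sum>k = n..2*n. norm (a k - a (k+1)))
             \<le> C * (\<Sum>k \<in> {k::nat. real n / L \<le> real k \<and> real k \<le> L * real n}.
                      norm (a k) / real k)))"

end

theory Submission imports Defs begin

lemma tele:
  fixes f :: "nat \<Rightarrow> real"
  shows "x \<le> y \<Longrightarrow> \<bar>f x - f y\<bar> \<le> (\<Sum>k\<in>{x..<y}. \<bar>f k - f (k+1)\<bar>)"
proof (induction y)
  case 0 then show ?case by simp
next
  case (Suc y)
  show ?case
  proof (cases "x = Suc y")
    case True then show ?thesis by simp
  next
    case False
    then have xy: "x \<le> y" using Suc.prems by simp
    have "\<bar>f x - f (Suc y)\<bar> \<le> \<bar>f x - f y\<bar> + \<bar>f y - f (y+1)\<bar>" by simp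
    also have "\<dots> \<le> (\<Sum>k\<in>{x..<y}. \<bar>f k - f (k+1)\<bar>) + \<bar>f y - f (y+1)\<bar>"
      using Suc.IH[OF xy] by simp
    also have "\<dots> = (\<Sum>k\<in>{x..<Suc y}. \<bar>f k - f (k+1)\<bar>)"
      using xy by (simp add: sum.atLeastLessThan_Suc)
    finally show ?thesis .
  qed
qed

lemma tele2:
  fixes f :: "nat \<Rightarrow> real"
  assumes "x \<in> {p..<q}" "y \<in> {p..<q}"
  shows "\<bar>f x - f y\<bar> \<le> (\<Sum>k\<in>{p..<q}. \<bar>f k - f (k+1)\<bar>)"
proof -
  have gen: "\<bar>f u - f v\<bar> \<le> (\<Sum>k\<in>{p..<q}. \<bar>f k - f (k+1)\<bar>)"
    if "u \<le> v" "u \<in> {p..<q}" "v \<in> {p..<q}" for u v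
  proof -
    have "\<bar>f u - f v\<bar> \<le> (\<Sum>k\<in>{u..<v}. \<bar>f k - f (k+1)\<bar>)" using tele that(1) by blast
    also have "\<dots> \<le> (\<Sum>k\<in>{p..<q}. \<bar>f k - f (k+1)\<bar>)"
      by (rule sum_mono2) (use that in auto)
    finally show ?thesis .
  qed
  show ?thesis
  proof (cases "x \<le> y")
    case True then show ?thesis using gen assms by blast
  next
    case False then show ?thesis using gen[of y x] assms by (simp add: abs_minus_commute)
  qed
qed

lemma piece:
  fixes f :: "nat \<Rightarrow> real"
  shows "(\<Sum>k\<in>{p..<q}. \<bar>f k\<bar>) \<le> \<bar>\<Sum>k\<in>{p..<q}. f k\<bar> + real (q - p) * (\<Sum>k\<in>{p..<q}. \<bar>f k - f (k+1)\<bar>)"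
proof -
  let ?T = "\<Sum>k\<in>{p..<q}. \<bar>f k - f (k+1)\<bar>"
  have T0: "?T \<ge> 0" by (simp add: sum_nonneg)
  show ?thesis
  proof (cases "\<forall>k\<in>{p..<q}. f k \<ge> 0")
    case True
    then have "(\<Sum>k\<in>{p..<q}. \<bar>f k\<bar>) = (\<Sum>k\<in>{p..<q}. f k)" by (intro sum.cong) auto
    moreover have "0 \<le> real (q - p) * ?T" using T0 by simp
    ultimately show ?thesis using abs_ge_self[of "\<Sum>k\<in>{p..<q}. f k"] by linarith
  next
    case F1: False
    show ?thesis
    proof (cases "\<forall>k\<in>{p..<q}. f k \<le> 0")
      case True
      then have "(\<Sum>k\<in>{p..<q}. \<bar>f k\<bar>) = - (\<Sum>k\<in>{p..<q}. f k)"
        by (simp add: sum_negf[symmetric])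
      moreover have "0 \<le> real (q - p) * ?T" using T0 by simp
      ultimately show ?thesis using abs_ge_minus_self[of "\<Sum>k\<in>{p..<q}. f k"] by linarith
    next
      case False
      with F1 obtain x y where x: "x \<in> {p..<q}" "f x < 0" and y: "y \<in> {p..<q}" "f y > 0"
        by (auto simp: not_le)
      have "\<bar>f k\<bar> \<le> ?T" if k: "k \<in> {p..<q}" for k
      proof (cases "f k \<ge> 0")
        case True
        then have "\<bar>f k\<bar> \<le> \<bar>f k - f x\<bar>" using x by simp
        then show ?thesis using tele2[OF k x(1), of f] by linarith
      next
        case False
        then have "\<bar>f k\<bar> \<le> \<bar>f k - f y\<bar>" using y by simp
        then show ?thesis using tele2[OF k y(1), of f] by linarith
      qed
      then have "(\<Sum>k\<in>{p..<q}. \<bar>f k\<bar>) \<le> real (card {p..<q}) * ?T"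
        by (intro sum_bounded_above) auto
      then show ?thesis by simp
    qed
  qed
qed

lemma split_blocks:
  fixes g :: "nat \<Rightarrow> real"
  shows "(\<Sum>k\<in>{p..<p+N*h}. g k) = (\<Sum>t<N. \<Sum>k\<in>{p+t*h..<p+t*h+h}. g k)"
proof (induction N)
  case 0 then show ?case by simp
next
  case (Suc N)
  have eq: "p + Suc N * h = p + N*h + h" by simp
  have "(\<Sum>k\<in>{p..<p+Suc N*h}. g k) = (\<Sum>k\<in>{p..<p+N*h}. g k) + (\<Sum>k\<in>{p+N*h..<p+N*h+h}. g k)"
    unfolding eq by (rule sum.atLeastLessThan_concat[symmetric]) auto
  then show ?case using Suc.IH by simp
qed

lemma dyadic:
  fixes g :: "nat \<Rightarrow> real"
  shows "a \<le> b \<Longrightarrow> (\<Sum>k\<in>{2^a..<2^b}. g k) = (\<Sum>i\<in>{a..<b}. \<Sum>k\<in>{2^i..<2^(Suc i)}. g k)"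
proof (induction b)
  case 0 then show ?case by simp
next
  case (Suc b)
  show ?case
  proof (cases "a = Suc b")
    case True then show ?thesis by simp
  next
    case False
    then have ab: "a \<le> b" using Suc.prems by simp
    have m: "(2::nat)^a \<le> 2^b" "(2::nat)^b \<le> 2^Suc b" using ab by (auto intro: power_increasing)
    have "(\<Sum>k\<in>{2^a..<2^Suc b}. g k) = (\<Sum>k\<in>{2^a..<2^b}. g k) + (\<Sum>k\<in>{2^b..<2^Suc b}. g k)"
      by (rule sum.atLeastLessThan_concat[OF m, symmetric])
    then show ?thesis using Suc.IH[OF ab] ab by (simp add: sum.atLeastLessThan_Suc)
  qed
qed


lemma card_win: "card {j-r..<j+r+1} \<le> 2*r+1"
  by simp

lemma sum_win_bound:
  fixes X :: "nat \<Rightarrow> real"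
  assumes "\<forall>i\<in>{j-r..<j+r+1}. X i \<le> M" "M \<ge> 0"
  shows "(\<Sum>i\<in>{j-r..<j+r+1}. X i) \<le> (2*real r+1)*M"
proof -
  have "(\<Sum>i\<in>{j-r..<j+r+1}. X i) \<le> real (card {j-r..<j+r+1}) * M"
    by (rule sum_bounded_above) (use assms in auto)
  also have "\<dots> \<le> (2*real r+1)*M"
  proof -
    have cw: "real (card {j-r..<j+r+1}) \<le> real (2*r+1)" using card_win[of j r] by (simp only: of_nat_le_iff)
    show ?thesis by (intro mult_right_mono) (use cw assms(2) in auto)
  qed
  finally show ?thesis .
qed

lemma aux_cancel: "(q::real) > 0 \<Longrightarrow> 1/(q*x)*q = 1/x"
  by (cases "x = 0") (auto simp: field_simps)

lemma decay:
  fixes X :: "nat \<Rightarrow> real" and r :: nat and c :: real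
  assumes nn: "\<And>j. X j \<ge> 0" and gr: "\<And>j. X j \<le> c * 2^j"
    and H: "\<And>\<theta> \<epsilon>. \<theta> > 0 \<Longrightarrow> \<epsilon> > 0 \<Longrightarrow> \<exists>J. \<forall>j\<ge>J. X j \<le> \<epsilon> + \<theta> * (\<Sum>i\<in>{j-r..<j+r+1}. X i)"
    and e: "e > 0"
  shows "\<exists>J. \<forall>j\<ge>J. X j \<le> e"
proof -
  have c0: "c \<ge> 0" using nn[of 0] gr[of 0] by simp
  define \<theta>1 :: real where "\<theta>1 = 1 / ((2*real r+1) * 2^(r+1))"
  have \<theta>1p: "\<theta>1 > 0" unfolding \<theta>1_def by (simp add: add_pos_nonneg)
  obtain J where HJ: "\<forall>j\<ge>J. X j \<le> 1 + \<theta>1 * (\<Sum>i\<in>{j-r..<j+r+1}. X i)"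
    using H[OF \<theta>1p, of 1] by auto
  define B where "B = max 2 (Max (X ` {..<J}))"
  have B2: "B \<ge> 2" unfolding B_def by simp
  have Blow: "X j \<le> B" if "j < J" for j
  proof -
    have "X j \<le> Max (X ` {..<J})" by (rule Max_ge) (use that in auto)
    then show ?thesis unfolding B_def by (simp add: le_max_iff_disj)
  qed
  have ind: "\<forall>j. X j \<le> B + c * 2^j / 2^t" for t
  proof (induction t)
    case 0
    show ?case using gr B2 by (simp add: add.commute add_increasing)
  next
    case (Suc t)
    show ?case
    proof
      fix j
      show "X j \<le> B + c*2^j/2^Suc t"
      proof (cases "j < J")
        case True
        have "0 \<le> c*2^j/2^Suc t" using c0 by simp
        then show ?thesis using Blow[OF True] by linarith
      next
        case False
        have w: "\<forall>i\<in>{j-r..<j+r+1}. X i \<le> B + c*2^(j+r)/2^t"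
        proof
          fix i assume i: "i \<in> {j-r..<j+r+1}"
          have "(2::real)^i \<le> 2^(j+r)" using i by (intro power_increasing) auto
          then have "c*2^i/2^t \<le> c*2^(j+r)/2^t" using c0
            by (intro divide_right_mono mult_left_mono) auto
          then show "X i \<le> B + c*2^(j+r)/2^t" using Suc.IH by (metis add_le_cancel_left order_trans)
        qed
        have s: "(\<Sum>i\<in>{j-r..<j+r+1}. X i) \<le> (2*real r+1)*(B + c*2^(j+r)/2^t)"
          by (rule sum_win_bound[OF w]) (use B2 c0 in simp)
        have "X j \<le> 1 + \<theta>1 * ((2*real r+1)*(B + c*2^(j+r)/2^t))"
          using HJ False s \<theta>1p by (meson add_left_mono mult_left_mono not_less order_trans less_imp_le)
        also have "\<dots> = 1 + B/2^(r+1) + c*2^j/2^(Suc t)"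
        proof -
          have qn: "(2*real r+1) > 0" by simp
          have q: "\<theta>1 * (2*real r+1) = 1/2^(r+1)" unfolding \<theta>1_def by (rule aux_cancel[OF qn])
          have "\<theta>1 * ((2*real r+1)*(B + c*2^(j+r)/2^t)) = (\<theta>1 * (2*real r+1))*(B + c*2^(j+r)/2^t)"
            by (simp only: mult.assoc)
          also have "\<dots> = B/2^(r+1) + c*2^j/2^(Suc t)" unfolding q by (simp add: field_simps power_add)
          finally show ?thesis by simp
        qed
        also have "\<dots> \<le> B + c*2^j/2^Suc t"
        proof -
          have "B/2^(r+1) \<le> B/2" using B2 by (intro divide_left_mono) (auto simp: power_Suc)
          then show ?thesis using B2 by linarith
        qed
        finally show ?thesis .
      qed
    qed
  qed
  have bnd: "X j \<le> B" for j
  proof (rule ccontr)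
    assume "\<not> X j \<le> B"
    then have d: "X j - B > 0" by simp
    obtain t where t: "c*2^j/(X j - B) < 2^t" using real_arch_pow[of 2 "c*2^j/(X j - B)"] by auto
    then have "c*2^j < 2^t * (X j - B)" using d by (simp add: pos_divide_less_eq)
    then have "c*2^j/2^t < X j - B" by (simp add: pos_divide_less_eq mult.commute)
    with ind[of t] show False by (metis add.commute less_diff_eq not_less)
  qed
  define \<theta>2 :: real where "\<theta>2 = 1/(2*(2*real r+1))"
  have \<theta>2p: "\<theta>2 > 0" unfolding \<theta>2_def by simp
  have e3: "e/3 > 0" using e by simp
  obtain J2 where HJ2: "\<forall>j\<ge>J2. X j \<le> e/3 + \<theta>2 * (\<Sum>i\<in>{j-r..<j+r+1}. X i)"
    using H[OF \<theta>2p e3] by auto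
  have ind2: "\<forall>j \<ge> J2 + t*r. X j \<le> 2*(e/3) + B/2^t" for t
  proof (induction t)
    case 0
    show ?case using bnd e by (simp add: add_increasing)
  next
    case (Suc t)
    show ?case
    proof (intro allI impI)
      fix j assume j: "J2 + Suc t * r \<le> j"
      have w: "\<forall>i\<in>{j-r..<j+r+1}. X i \<le> 2*(e/3) + B/2^t"
        using Suc.IH j by auto
      have s: "(\<Sum>i\<in>{j-r..<j+r+1}. X i) \<le> (2*real r+1)*(2*(e/3) + B/2^t)"
        by (rule sum_win_bound[OF w]) (use B2 e in simp)
      have "X j \<le> e/3 + \<theta>2 * ((2*real r+1)*(2*(e/3) + B/2^t))"
        using HJ2 j s \<theta>2p by (meson add_left_mono mult_left_mono order_trans less_imp_le le_add1 le_trans)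
      also have "\<dots> = 2*(e/3) + B/2^Suc t"
      proof -
        have qn: "(2*real r+1) > 0" by simp
        have q: "\<theta>2 * (2*real r+1) = 1/2" unfolding \<theta>2_def using qn by (simp add: field_simps)
        have "\<theta>2 * ((2*real r+1)*(2*(e/3) + B/2^t)) = (\<theta>2 * (2*real r+1))*(2*(e/3) + B/2^t)"
          by (simp only: mult.assoc)
        also have "\<dots> = e/3 + B/2^Suc t" unfolding q by (simp add: field_simps)
        finally show ?thesis by simp
      qed
      finally show "X j \<le> 2*(e/3) + B/2^Suc t" .
    qed
  qed
  obtain t where t: "3*B/e < 2^t" using real_arch_pow[of 2 "3*B/e"] by auto
  then have "B/2^t < e/3" using e by (simp add: field_simps)
  then have "\<forall>j\<ge>J2 + t*r. X j \<le> e"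
  proof (intro allI impI)
    fix j assume "J2 + t*r \<le> j" "B/2^t < e/3"
    then have "X j \<le> 2*(e/3) + B/2^t" using ind2[of t] by blast
    then show "X j \<le> e" using \<open>B/2^t < e/3\<close> by linarith
  qed
  then show ?thesis by blast
qed


theorem mainTheorem6:
  fixes a :: "nat \<Rightarrow> real"
  assumes "GMS (\<lambda>n. complex_of_real (a n))"
    and "summable a"
  shows "(\<lambda>n. real n * a n) \<longlonglongrightarrow> 0"
proof -
  from assms(1) obtain C L where CL: "C > 1" "L > 1"
    and GM0: "\<forall>n::nat. n \<ge> 1 \<longrightarrow> (\<Sum>k = n..2*n. norm (complex_of_real (a k) - complex_of_real (a (k+1))))
             \<le> C * (\<Sum>k \<in> {k::nat. real n / L \<le> real k \<and> real k \<le> L * real n}.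
                      norm (complex_of_real (a k)) / real k)"
    and lim0: "(\<lambda>n. complex_of_real (a n)) \<longlonglongrightarrow> 0"
    unfolding GMS_def by blast
  have GM: "(\<Sum>k = n..2*n. \<bar>a k - a (k+1)\<bar>) \<le> C * (\<Sum>k\<in>{k::nat. real n / L \<le> real k \<and> real k \<le> L * real n}. \<bar>a k\<bar> / real k)"
    if "n \<ge> 1" for n
    using GM0 that by (simp flip: of_real_diff)
  have "(\<lambda>n. Re (complex_of_real (a n))) \<longlonglongrightarrow> Re 0" by (rule tendsto_Re[OF lim0])
  then have alim: "a \<longlonglongrightarrow> 0" by simp
  have "Bseq a" using alim by (intro convergent_imp_Bseq) (auto simp: convergent_def)
  then obtain c0 where c0: "\<And>k. \<bar>a k\<bar> \<le> c0" by (metis BseqE real_norm_def)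
  obtain r :: nat where Lr: "L < 2^r" using real_arch_pow[of 2 L] by auto
  define X where "X j = (\<Sum>k\<in>{2^j..<2^(Suc j)}. \<bar>a k\<bar>)" for j
  have Xnn: "X j \<ge> 0" for j unfolding X_def by (simp add: sum_nonneg)
  have cardb: "card {(2::nat)^j..<2^(Suc j)} = 2^j" for j by simp
  have Xgr: "X j \<le> c0 * 2^j" for j
  proof -
    have "X j \<le> real (card {(2::nat)^j..<2^(Suc j)}) * c0"
      unfolding X_def by (rule sum_bounded_above) (use c0 in auto)
    then show ?thesis unfolding cardb by (simp add: mult.commute)
  qed
  have TV: "(\<Sum>k\<in>{2^j..<2^(Suc j)}. \<bar>a k - a (k+1)\<bar>) \<le> C*L/2^j * (\<Sum>i\<in>{j-r..<j+r+1}. X i)"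
    if jr: "j \<ge> r" for j
  proof -
    let ?n = "2^j :: nat"
    let ?W = "{k::nat. real ?n / L \<le> real k \<and> real k \<le> L * real ?n}"
    have Wsub: "?W \<subseteq> {2^(j-r)..<2^(j+r+1)}"
    proof
      fix k assume "k \<in> ?W"
      then have k1: "real ?n / L \<le> real k" and k2: "real k \<le> L * real ?n" by auto
      have pw: "(2::real)^j = 2^(j-r) * 2^r" using jr by (simp flip: power_add)
      then have "real (2^(j-r)) = (2::real)^j / 2^r" by simp
      also have "\<dots> \<le> 2^j / L" using Lr CL by (intro divide_left_mono) auto
      also have "\<dots> \<le> real k" using k1 by simp
      finally have lo: "2^(j-r) \<le> k" by (simp only: of_nat_le_iff)
      have "real k \<le> L*2^j" using k2 by simp
      also have "\<dots> \<le> 2^r * 2^j" using Lr by (intro mult_right_mono) auto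
      also have "\<dots> < 2^(j+r+1)" by (simp add: power_add)
      finally have "real k < real ((2::nat)^(j+r+1))" by simp
      then have "k < 2^(j+r+1)" by (simp only: of_nat_less_iff)
      with lo show "k \<in> {2^(j-r)..<2^(j+r+1)}" by simp
    qed
    have finW: "finite ?W" using Wsub finite_subset by blast
    have C0: "C \<ge> 0" using CL by simp
    have "(\<Sum>k\<in>{2^j..<2^(Suc j)}. \<bar>a k - a (k+1)\<bar>) \<le> (\<Sum>k = ?n..2*?n. \<bar>a k - a (k+1)\<bar>)"
      by (rule sum_mono2) auto
    also have "\<dots> \<le> C * (\<Sum>k\<in>?W. \<bar>a k\<bar> / real k)" using GM[of ?n] by simp
    also have "\<dots> \<le> C * (\<Sum>k\<in>?W. \<bar>a k\<bar> * (L / 2^j))"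
    proof (intro mult_left_mono sum_mono C0)
      fix k assume k: "k \<in> ?W"
      then have k1: "2^j / L \<le> real k" by simp
      have pos: "0 < (2::real)^j / L" using CL by simp
      have "inverse (real k) \<le> inverse (2^j / L)" by (rule le_imp_inverse_le[OF k1 pos])
      then have "1 / real k \<le> L / 2^j" by (simp add: inverse_eq_divide)
      then have "\<bar>a k\<bar> * (1 / real k) \<le> \<bar>a k\<bar> * (L / 2^j)" by (intro mult_left_mono) auto
      then show "\<bar>a k\<bar> / real k \<le> \<bar>a k\<bar> * (L / 2^j)" by simp
    qed
    also have "\<dots> = C * ((\<Sum>k\<in>?W. \<bar>a k\<bar>) * (L / 2^j))" by (simp only: sum_distrib_right)
    also have "\<dots> \<le> C * ((\<Sum>k\<in>{2^(j-r)..<2^(j+r+1)}. \<bar>a k\<bar>) * (L / 2^j))"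
      using CL by (intro mult_left_mono mult_right_mono sum_mono2 Wsub) auto
    also have "\<dots> = C*L/2^j * (\<Sum>i\<in>{j-r..<j+r+1}. X i)"
    proof -
      have dy: "(\<Sum>k\<in>{2^(j-r)..<2^(j+r+1)}. \<bar>a k\<bar>) = (\<Sum>i\<in>{j-r..<j+r+1}. X i)"
        unfolding X_def by (rule dyadic) simp
      have gen: "\<And>S::real. C*(S*(L/2^j)) = C*L/2^j*S" by (simp add: field_simps)
      show ?thesis unfolding dy by (rule gen)
    qed
    finally show ?thesis .
  qed
  have H: "\<exists>J. \<forall>j\<ge>J. X j \<le> \<epsilon> + \<theta> * (\<Sum>i\<in>{j-r..<j+r+1}. X i)"
    if th: "\<theta> > 0" and ep: "\<epsilon> > 0" for \<theta> \<epsilon>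
  proof -
    obtain s where s: "C*L/\<theta> < 2^s" using real_arch_pow[of 2 "C*L/\<theta>"] by auto
    define N where "N = (2::nat)^s"
    have Npos: "real N > 0" unfolding N_def by simp
    have eN: "\<epsilon> / real N > 0" using ep Npos by simp
    obtain P where P: "\<And>m n. m \<ge> P \<Longrightarrow> norm (\<Sum>k=m..n. a k) < \<epsilon> / real N"
      using summable_partial_sum_bound[OF assms(2) eN] by blast
    have CLN: "C*L/real N \<le> \<theta>"
    proof -
      have "C*L < \<theta> * real N" using s th unfolding N_def by (simp add: pos_divide_less_eq mult.commute)
      then show ?thesis using Npos by (simp add: pos_divide_le_eq mult.commute)
    qed
    show ?thesis
    proof (intro exI[of _ "max (max s r) P"] allI impI)
      fix j assume j: "max (max s r) P \<le> j"
      define h where "h = (2::nat)^(j-s)"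
      have hN: "(2::nat)^j = N*h" unfolding N_def h_def using j by (simp flip: power_add)
      have h1: "h \<ge> 1" by (simp add: h_def)
      have "j < 2^j" by (rule less_exp)
      moreover have "P \<le> j" using j by simp
      ultimately have jP: "P \<le> 2^j" by linarith
      have blk: "{(2::nat)^j..<2^(Suc j)} = {2^j..<2^j + N*h}" using hN by (simp add: mult_2)
      let ?T = "\<lambda>t. (\<Sum>k\<in>{2^j+t*h..<2^j+t*h+h}. \<bar>a k - a (k+1)\<bar>)"
      have "X j = (\<Sum>t<N. \<Sum>k\<in>{2^j+t*h..<2^j+t*h+h}. \<bar>a k\<bar>)" unfolding X_def blk by (rule split_blocks)
      also have "\<dots> \<le> (\<Sum>t<N. \<epsilon>/real N + real h * ?T t)"
      proof (rule sum_mono)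
        fix t assume "t \<in> {..<N}"
        define p where "p = (2::nat)^j+t*h"
        have pc: "(\<Sum>k\<in>{p..<p+h}. \<bar>a k\<bar>) \<le> \<bar>\<Sum>k\<in>{p..<p+h}. a k\<bar> + real (p+h-p) * (\<Sum>k\<in>{p..<p+h}. \<bar>a k - a (k+1)\<bar>)"
          by (rule piece)
        have e: "{p..<p+h} = {p..p+h-1}" using h1 by auto
        have "P \<le> p" using jP unfolding p_def by simp
        then have "\<bar>\<Sum>k\<in>{p..<p+h}. a k\<bar> < \<epsilon>/real N" unfolding e using P[of p "p+h-1"] by simp
        then show "(\<Sum>k\<in>{2^j+t*h..<2^j+t*h+h}. \<bar>a k\<bar>) \<le> \<epsilon>/real N + real h * ?T t"
          using pc unfolding p_def by simp
      qed
      also have "\<dots> = \<epsilon> + real h * (\<Sum>t<N. ?T t)"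
        using Npos by (simp add: sum.distrib sum_distrib_left)
      also have "(\<Sum>t<N. ?T t) = (\<Sum>k\<in>{2^j..<2^(Suc j)}. \<bar>a k - a (k+1)\<bar>)"
        unfolding blk by (rule split_blocks[symmetric])
      also have "\<epsilon> + real h * (\<Sum>k\<in>{2^j..<2^(Suc j)}. \<bar>a k - a (k+1)\<bar>)
          \<le> \<epsilon> + real h * (C*L/2^j * (\<Sum>i\<in>{j-r..<j+r+1}. X i))"
        using TV[of j] j by (intro add_left_mono mult_left_mono) auto
      also have "\<dots> = \<epsilon> + (C*L/real N) * (\<Sum>i\<in>{j-r..<j+r+1}. X i)"
      proof -
        have "(2::real)^j = real N * real h" using hN by (metis of_nat_mult of_nat_numeral of_nat_power)
        then show ?thesis using Npos h1 by (simp add: field_simps)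
      qed
      also have "\<dots> \<le> \<epsilon> + \<theta> * (\<Sum>i\<in>{j-r..<j+r+1}. X i)"
        using CLN by (intro add_left_mono mult_right_mono) (auto simp: sum_nonneg Xnn)
      finally show "X j \<le> \<epsilon> + \<theta> * (\<Sum>i\<in>{j-r..<j+r+1}. X i)" .
    qed
  qed
  show ?thesis
    unfolding LIMSEQ_iff
  proof (intro allI impI)
    fix e :: real assume e: "e > 0"
    define K where "K = 1 + C*L*(2*real r+1)"
    have K: "K > 0" unfolding K_def using CL by (simp add: add_pos_nonneg)
    define \<delta> where "\<delta> = e / (4*K)"
    have dp: "\<delta> > 0" unfolding \<delta>_def using e K by simp
    obtain J0 where J0: "\<forall>j\<ge>J0. X j \<le> \<delta>"
      using decay[of X c0 r, OF Xnn Xgr H dp] by blast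
    show "\<exists>no. \<forall>n\<ge>no. norm (real n * a n - 0) < e"
    proof (intro exI[of _ "2^(J0+r)"] allI impI)
      fix n :: nat assume n: "2^(J0+r) \<le> n"
      have n1: "n \<ge> 1" using n by (meson le_trans one_le_numeral one_le_power)
      obtain j where j: "2^j \<le> n" "n < 2^(j+1)" using ex_power_ivl1[of 2 n] n1 by auto
      have jJ: "j \<ge> J0 + r"
      proof (rule ccontr)
        assume "\<not> j \<ge> J0 + r"
        then have "(2::nat)^(j+1) \<le> 2^(J0+r)" by (intro power_increasing) auto
        then show False using j n by simp
      qed
      have win: "\<forall>i\<in>{j-r..<j+r+1}. X i \<le> \<delta>" using J0 jJ by auto
      have sw: "(\<Sum>i\<in>{j-r..<j+r+1}. X i) \<le> (2*real r+1)*\<delta>"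
        by (rule sum_win_bound[OF win]) (use dp in simp)
      let ?B = "{(2::nat)^j..<2^(Suc j)}"
      let ?T = "\<Sum>k\<in>?B. \<bar>a k - a (k+1)\<bar>"
      have nb: "n \<in> ?B" using j by simp
      have pt: "\<bar>a n\<bar> \<le> \<bar>a k\<bar> + ?T" if "k \<in> ?B" for k
        using tele2[OF nb that, of a] by linarith
      have "(\<Sum>k\<in>?B. \<bar>a n\<bar>) \<le> (\<Sum>k\<in>?B. \<bar>a k\<bar> + ?T)" by (rule sum_mono) (rule pt)
      then have "2^j * \<bar>a n\<bar> \<le> X j + 2^j * ?T" unfolding X_def by (simp add: sum.distrib cardb)
      also have "2^j * ?T \<le> 2^j * (C*L/2^j * (\<Sum>i\<in>{j-r..<j+r+1}. X i))"
        using TV[of j] jJ by (intro mult_left_mono) auto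
      also have "\<dots> = C*L * (\<Sum>i\<in>{j-r..<j+r+1}. X i)" by simp
      also have "\<dots> \<le> C*L*((2*real r+1)*\<delta>)" using sw CL by (intro mult_left_mono) auto
      finally have A: "2^j * \<bar>a n\<bar> \<le> X j + C*L*((2*real r+1)*\<delta>)" by simp
      have "X j \<le> \<delta>" using J0 jJ by simp
      with A have A2: "2^j * \<bar>a n\<bar> \<le> K * \<delta>" unfolding K_def by (simp add: algebra_simps)
      have "real n \<le> 2 * 2^j" using j by (metis of_nat_le_iff of_nat_mult of_nat_numeral of_nat_power less_imp_le power_Suc Suc_eq_plus1)
      then have "real n * \<bar>a n\<bar> \<le> 2 * 2^j * \<bar>a n\<bar>" by (intro mult_right_mono) auto
      also have "\<dots> \<le> 2 * (K * \<delta>)" using A2 by simp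
      also have "\<dots> = e/2" unfolding \<delta>_def using K by simp
      finally have "real n * \<bar>a n\<bar> \<le> e/2" .
      then show "norm (real n * a n - 0) < e" using e by (simp add: abs_mult)
    qed
  qed
qed

end
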